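(* Let $k\geq 3$, $A=\{0,1,\dots,k-1\}$ and $n=k-1$. Let $T\colon A^{n^2}\to A$ be the $n^2$-ary operation whose arguments are written as $x_{1,1},\dots,x_{1,n},x_{2,1},\dots,x_{2,n},\dots,x_{n,1},\dots,x_{n,n}$ (row by row), defined by $T(x_{1,1},\dots,x_{n,n})=1$ if $x_{i,j}=i$ for all $i,j\in\{1,\dots,n\}$ or $x_{i,j}=j$ for all $i,j\in\{1,\dots,n\}$, and $T(x_{1,1},\dots,x_{n,n})=0$ otherwise. Let $f\colon A^n\to A$ be given by $f(\mathbf{x})=1$ if $\mathbf{x}\in\{(1,2,\dots,n),(n,n-1,\dots,1)\}$ and $f(\mathbf{x})=0$ otherwise. For variables $x_{i,j}$ ($1\leq i,j\leq n$) write $\swarrow = (x_{1,n},x_{2,n-1},\dots,x_{n-1,2},x_{n,1})$, $\nearrow=(x_{n,1},x_{n-1,2},\dots,x_{2,n-1},x_{1,n})$, and for $1\leq i\leq n$: $\rightarrow_i=(x_{i,1},\dots,x_{i,n})$, $\leftarrow_i=(x_{i,n},\dots,x_{i,1})$, $\downarrow_i=(x_{1,i},\dots,x_{n,i})$, $\uparrow_i=(x_{n,i},\dots,x_{1,i})$; an expression $T(\mathbf{s}_1,\dots,\mathbf{s}_n)$ with $n$-tuples $\mathbf{s}_i$ means $T$ applied to the concatenation of these tuples. Then \[ \{(\swarrow,y)\in A^k : f(\swarrow)=y\} =\Bigl\{(\swarrow,y)\in A^k : \exists\, (x_{i,j})_{1\leq i,j\leq n,\ i+j\neq k}\in A\colon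 T(\rightarrow_1,\dots,\rightarrow_n)=y,\ T(\swarrow,\dots,\swarrow)=T(\rightarrow_1,\leftarrow_2,\dots,\leftarrow_n),\ T(\nearrow,\dots,\nearrow)=T(\downarrow_1,\uparrow_2,\dots,\uparrow_n)\Bigr\}, \] and this set also equals \[ \Bigl\{(\swarrow,y)\in A^k : \exists\, (x_{i,j})_{i+j\neq k}\in A\ \exists u,v\in A\colon T(\rightarrow_1,\dots,\rightarrow_n)=y\wedge T(\swarrow,\dots,\swarrow)=u\wedge T(\rightarrow_1,\leftarrow_2,\dots,\leftarrow_n)=u\wedge T(\nearrow,\dots,\nearrow)=v\wedge T(\downarrow_1,\uparrow_2,\dots,\uparrow_n)=v\Bigr\}. \] In particular the graph of $f$ is primitive positively definable from the graph of $T$.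
   Context: Here $(\swarrow,y)$ denotes the $k$-tuple $(x_{1,n},x_{2,n-1},\dots,x_{n,1},y)$; the variables $x_{i,j}$ with $i+j=k$ (the entries of $\swarrow$) are free and all other $x_{i,j}$ are existentially quantified. *)

theory Defs
  imports Main
begin

text \<open>Domain A = {0,...,k-1}; n = k-1. Tuples are lists of naturals.
  Matrix variables are x :: nat => nat => nat, used with 1-based indices 1..n.\<close>

definition dom_A :: "nat \<Rightarrow> nat set" where
  "dom_A k = {0..<k}"

definition T_op :: "nat \<Rightarrow> nat list \<Rightarrow> nat" where
  "T_op n xs =
     (if (\<forall>i\<in>{1..n}. \<forall>j\<in>{1..n}. xs ! ((i-1)*n + (j-1)) = i)
       \<or> (\<forall>i\<in>{1..n}. \<forall>j\<in>{1..n}. xs ! ((i-1)*n + (j-1)) = j)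
      then 1 else 0)"

definition f_op :: "nat \<Rightarrow> nat list \<Rightarrow> nat" where
  "f_op n xs = (if xs = [1..<n+1] \<or> xs = rev [1..<n+1] then 1 else 0)"

definition row_r :: "nat \<Rightarrow> (nat \<Rightarrow> nat \<Rightarrow> nat) \<Rightarrow> nat \<Rightarrow> nat list" where
  "row_r n x i = map (\<lambda>j. x i j) [1..<n+1]"
definition row_l :: "nat \<Rightarrow> (nat \<Rightarrow> nat \<Rightarrow> nat) \<Rightarrow> nat \<Rightarrow> nat list" where
  "row_l n x i = rev (row_r n x i)"
definition col_d :: "nat \<Rightarrow> (nat \<Rightarrow> nat \<Rightarrow> nat) \<Rightarrow> nat \<Rightarrow> nat list" where
  "col_d n x i = map (\<lambda>j. x j i) [1..<n+1]"
definition col_u :: "nat \<Rightarrow> (nat \<Rightarrow> nat \<Rightarrow> nat) \<Rightarrow> nat \<Rightarrow> nat list" where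
  "col_u n x i = rev (col_d n x i)"
definition diag_sw :: "nat \<Rightarrow> (nat \<Rightarrow> nat \<Rightarrow> nat) \<Rightarrow> nat list" where
  "diag_sw n x = map (\<lambda>i. x i (n + 1 - i)) [1..<n+1]"
definition diag_ne :: "nat \<Rightarrow> (nat \<Rightarrow> nat \<Rightarrow> nat) \<Rightarrow> nat list" where
  "diag_ne n x = rev (diag_sw n x)"

definition admissible :: "nat \<Rightarrow> nat list \<Rightarrow> (nat \<Rightarrow> nat \<Rightarrow> nat) \<Rightarrow> bool" where
  "admissible k x_d x \<longleftrightarrow>
     (\<forall>i\<in>{1..k-1}. \<forall>j\<in>{1..k-1}. x i j \<in> dom_A k) \<and> diag_sw (k-1) x = x_d"

end

theory Submission
  imports Defs
begin

lemma len_concat_rows: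
  "\<forall>i\<in>{1..m}. length (r i) = n \<Longrightarrow> length (concat (map r [1..<m+1])) = m*n"
  by (induction m) auto

lemma nth_concat_rows:
  "\<forall>i\<in>{1..m}. length (r i) = n \<Longrightarrow> 1 \<le> i \<Longrightarrow> i \<le> m \<Longrightarrow> j < n \<Longrightarrow>
   concat (map r [1..<m+1]) ! ((i-1)*n + j) = r i ! j"
proof (induction m)
  case 0 then show ?case by simp
next
  case (Suc m)
  have L: "length (concat (map r [1..<m+1])) = m*n"
    using Suc.prems(1) by (intro len_concat_rows) auto
  have U: "concat (map r [1..<Suc m+1]) = concat (map r [1..<m+1]) @ r (Suc m)" by simp
  have IH: "concat (map r [1..<m+1]) ! ((i-1)*n + j) = r i ! j" if "i \<le> m"
    using Suc that by auto
  show ?case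
  proof (cases "i \<le> m")
    case True
    have "(i-1)*n + j < m*n"
    proof -
      have "(i-1)*n + j < (i-1)*n + n" using Suc.prems by simp
      also have "\<dots> = i*n" using Suc.prems(2) by (cases i) auto
      also have "\<dots> \<le> m*n" using True by simp
      finally show ?thesis .
    qed
    then show ?thesis unfolding U using IH True L by (simp del: upt_Suc add: nth_append)
  next
    case False
    then have "i = Suc m" using Suc.prems by simp
    then show ?thesis unfolding U using L by (simp del: upt_Suc add: nth_append)
  qed
qed

lemma T_gen:
  assumes "\<forall>i\<in>{1..n}. length (r i) = n"
  shows "T_op n (concat (map r [1..<n+1])) =
    (if (\<forall>i\<in>{1..n}. \<forall>j\<in>{1..n}. r i ! (j-1) = i) \<or> (\<forall>i\<in>{1..n}. \<forall>j\<in>{1..n}. r i ! (j-1) = j) then 1 else 0)"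
proof -
  have "\<And>i j. i\<in>{1..n} \<Longrightarrow> j\<in>{1..n} \<Longrightarrow> concat (map r [1..<n+1]) ! ((i-1)*n + (j-1)) = r i ! (j-1)"
  proof -
    fix i j assume a: "i\<in>{1..n}" "j\<in>{1..n}"
    have "1 \<le> i" "i \<le> n" "j-1 < n" using a by auto
    from nth_concat_rows[OF assms this] show "concat (map r [1..<n+1]) ! ((i-1)*n + (j-1)) = r i ! (j-1)" .
  qed
  then have e1: "(\<forall>i\<in>{1..n}. \<forall>j\<in>{1..n}. concat (map r [1..<n+1]) ! ((i-1)*n + (j-1)) = i)
     = (\<forall>i\<in>{1..n}. \<forall>j\<in>{1..n}. r i ! (j-1) = i)"
   and e2: "(\<forall>i\<in>{1..n}. \<forall>j\<in>{1..n}. concat (map r [1..<n+1]) ! ((i-1)*n + (j-1)) = j)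
     = (\<forall>i\<in>{1..n}. \<forall>j\<in>{1..n}. r i ! (j-1) = j)" by simp_all
  show ?thesis unfolding T_op_def e1 e2 ..
qed

lemma nth_row_r: "j \<in> {1..n} \<Longrightarrow> row_r n x i ! (j-1) = x i j"
  by (auto simp del: upt_Suc simp: row_r_def nth_append)
lemma nth_row_l: "j \<in> {1..n} \<Longrightarrow> row_l n x i ! (j-1) = x i (n+1-j)"
  by (auto simp del: upt_Suc simp: row_l_def row_r_def rev_nth Suc_diff_le)
lemma nth_col_d: "j \<in> {1..n} \<Longrightarrow> col_d n x i ! (j-1) = x j i"
  by (auto simp del: upt_Suc simp: col_d_def)
lemma nth_col_u: "j \<in> {1..n} \<Longrightarrow> col_u n x i ! (j-1) = x (n+1-j) i"
  by (auto simp del: upt_Suc simp: col_u_def col_d_def rev_nth Suc_diff_le)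
lemma nth_sw: "j \<in> {1..n} \<Longrightarrow> diag_sw n x ! (j-1) = x j (n+1-j)"
  by (auto simp del: upt_Suc simp: diag_sw_def)
lemma nth_ne: "j \<in> {1..n} \<Longrightarrow> diag_ne n x ! (j-1) = x (n+1-j) j"
  by (auto simp del: upt_Suc simp: diag_ne_def diag_sw_def rev_nth Suc_diff_le)

lemma T_gen2:
  assumes "\<forall>i\<in>{1..n}. length (r i) = n" and "\<forall>i\<in>{1..n}. \<forall>j\<in>{1..n}. r i ! (j-1) = e i j"
  shows "T_op n (concat (map r [1..<n+1])) =
    (if (\<forall>i\<in>{1..n}. \<forall>j\<in>{1..n}. e i j = i) \<or> (\<forall>i\<in>{1..n}. \<forall>j\<in>{1..n}. e i j = j) then 1 else 0)"
proof -
  have a: "(\<forall>i\<in>{1..n}. \<forall>j\<in>{1..n}. r i ! (j-1) = i) = (\<forall>i\<in>{1..n}. \<forall>j\<in>{1..n}. e i j = i)"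
    using assms(2) by (metis (no_types, lifting))
  have b: "(\<forall>i\<in>{1..n}. \<forall>j\<in>{1..n}. r i ! (j-1) = j) = (\<forall>i\<in>{1..n}. \<forall>j\<in>{1..n}. e i j = j)"
    using assms(2) by (metis (no_types, lifting))
  show ?thesis unfolding T_gen[OF assms(1)] a b ..
qed

lemma T_rows: "T_op n (concat (map (row_r n x) [1..<n+1])) =
   (if (\<forall>i\<in>{1..n}. \<forall>j\<in>{1..n}. x i j = i) \<or> (\<forall>i\<in>{1..n}. \<forall>j\<in>{1..n}. x i j = j) then 1 else 0)"
  by (rule T_gen2) (auto simp: row_r_def nth_row_r[unfolded row_r_def] simp del: upt_Suc)

lemma T_sw: "T_op n (concat (replicate n (diag_sw n x))) =
   (if (\<forall>i\<in>{1..n}. \<forall>j\<in>{1..n}. x j (n+1-j) = i) \<or> (\<forall>i\<in>{1..n}. \<forall>j\<in>{1..n}. x j (n+1-j) = j) then 1 else 0)"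
proof -
  have "replicate n (diag_sw n x) = map (\<lambda>_. diag_sw n x) [1..<n+1]"
    by (simp del: upt_Suc add: map_replicate_const)
  show ?thesis unfolding \<open>replicate n (diag_sw n x) = _\<close>
    by (rule T_gen2) (simp add: diag_sw_def, blast intro: nth_sw)
qed

lemma T_ne: "T_op n (concat (replicate n (diag_ne n x))) =
   (if (\<forall>i\<in>{1..n}. \<forall>j\<in>{1..n}. x (n+1-j) j = i) \<or> (\<forall>i\<in>{1..n}. \<forall>j\<in>{1..n}. x (n+1-j) j = j) then 1 else 0)"
proof -
  have "replicate n (diag_ne n x) = map (\<lambda>_. diag_ne n x) [1..<n+1]"
    by (simp del: upt_Suc add: map_replicate_const)
  show ?thesis unfolding \<open>replicate n (diag_ne n x) = _\<close>
    by (rule T_gen2) (simp add: diag_ne_def diag_sw_def, blast intro: nth_ne)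
qed

lemma T_rl: assumes "n \<ge> 1"
  shows "T_op n (row_r n x 1 @ concat (map (row_l n x) [2..<n+1])) =
   (if (\<forall>i\<in>{1..n}. \<forall>j\<in>{1..n}. (if i = 1 then x 1 j else x i (n+1-j)) = i)
     \<or> (\<forall>i\<in>{1..n}. \<forall>j\<in>{1..n}. (if i = 1 then x 1 j else x i (n+1-j)) = j) then 1 else 0)"
proof -
  have U: "[1..<n+1] = 1 # [2..<n+1]" using assms by (simp add: upt_conv_Cons numeral_2_eq_2 del: upt_Suc)
  have E: "row_r n x 1 @ concat (map (row_l n x) [2..<n+1])
      = concat (map (\<lambda>i. if i = 1 then row_r n x i else row_l n x i) [1..<n+1])"
    by (subst U, simp del: upt_Suc, rule arg_cong[where f=concat], rule map_cong, simp_all del: upt_Suc)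
  show ?thesis unfolding E
  proof (rule T_gen2)
    show "\<forall>i\<in>{1..n}. length (if i = 1 then row_r n x i else row_l n x i) = n"
      by (simp add: row_l_def row_r_def)
    show "\<forall>i\<in>{1..n}. \<forall>j\<in>{1..n}. (if i = 1 then row_r n x i else row_l n x i) ! (j - 1) = (if i = 1 then x 1 j else x i (n+1-j))"
    proof (intro ballI)
      fix i j assume ij: "i \<in> {1..n}" "j \<in> {1..n}"
      show "(if i = 1 then row_r n x i else row_l n x i) ! (j - 1) = (if i = 1 then x 1 j else x i (n+1-j))"
        using ij nth_row_r[OF ij(2), of x] nth_row_l[OF ij(2), of x] by (cases "i = 1") simp_all
    qed
  qed
qed

lemma T_du: assumes "n \<ge> 1"
  shows "T_op n (col_d n x 1 @ concat (map (col_u n x) [2..<n+1])) =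
   (if (\<forall>i\<in>{1..n}. \<forall>j\<in>{1..n}. (if i = 1 then x j 1 else x (n+1-j) i) = i)
     \<or> (\<forall>i\<in>{1..n}. \<forall>j\<in>{1..n}. (if i = 1 then x j 1 else x (n+1-j) i) = j) then 1 else 0)"
proof -
  have U: "[1..<n+1] = 1 # [2..<n+1]" using assms by (simp add: upt_conv_Cons numeral_2_eq_2 del: upt_Suc)
  have E: "col_d n x 1 @ concat (map (col_u n x) [2..<n+1])
      = concat (map (\<lambda>i. if i = 1 then col_d n x i else col_u n x i) [1..<n+1])"
    by (subst U, simp del: upt_Suc, rule arg_cong[where f=concat], rule map_cong, simp_all del: upt_Suc)
  show ?thesis unfolding E
  proof (rule T_gen2)
    show "\<forall>i\<in>{1..n}. length (if i = 1 then col_d n x i else col_u n x i) = n"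
      by (simp add: col_u_def col_d_def)
    show "\<forall>i\<in>{1..n}. \<forall>j\<in>{1..n}. (if i = 1 then col_d n x i else col_u n x i) ! (j - 1) = (if i = 1 then x j 1 else x (n+1-j) i)"
    proof (intro ballI)
      fix i j assume ij: "i \<in> {1..n}" "j \<in> {1..n}"
      show "(if i = 1 then col_d n x i else col_u n x i) ! (j - 1) = (if i = 1 then x j 1 else x (n+1-j) i)"
        using ij nth_col_d[OF ij(2), of x] nth_col_u[OF ij(2), of x] by (cases "i = 1") simp_all
    qed
  qed
qed

lemma nth_sw': "m < n \<Longrightarrow> diag_sw n x ! m = x (Suc m) (n - m)"
  by (simp add: diag_sw_def del: upt_Suc)

lemma len_sw[simp]: "length (diag_sw n x) = n"
  by (simp add: diag_sw_def)

lemma reidx: "(\<forall>m<n. P (Suc m)) = (\<forall>j\<in>{1..n}. P j)"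
proof
  assume H: "\<forall>m<n. P (Suc m)"
  show "\<forall>j\<in>{1..n}. P j"
  proof
    fix j assume "j \<in> {1..n}"
    then have "j = Suc (j-1)" "j-1 < n" by auto
    then show "P j" using H by metis
  qed
next
  assume "\<forall>j\<in>{1..n}. P j" then show "\<forall>m<n. P (Suc m)" by auto
qed

lemma sw_eq_upt: "(diag_sw n x = [1..<n+1]) = (\<forall>j\<in>{1..n}. x j (n+1-j) = j)"
proof -
  have "(diag_sw n x = [1..<n+1]) = (\<forall>m<n. x (Suc m) (n - m) = Suc m)"
    by (simp add: list_eq_iff_nth_eq nth_sw' del: upt_Suc)
  also have "\<dots> = (\<forall>j\<in>{1..n}. x j (n+1-j) = j)"
    using reidx[of n "\<lambda>j. x j (n+1-j) = j"] by simp
  finally show ?thesis .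
qed

lemma sw_eq_rev: "(diag_sw n x = rev [1..<n+1]) = (\<forall>j\<in>{1..n}. x j (n+1-j) = n+1-j)"
proof -
  have "(diag_sw n x = rev [1..<n+1]) = (\<forall>m<n. x (Suc m) (n - m) = n - m)"
    by (simp add: list_eq_iff_nth_eq nth_sw' rev_nth Suc_diff_Suc del: upt_Suc)
  also have "\<dots> = (\<forall>j\<in>{1..n}. x j (n+1-j) = n+1-j)"
    using reidx[of n "\<lambda>j. x j (n+1-j) = n+1-j"] by simp
  finally show ?thesis .
qed

lemma T_sw': assumes "n \<ge> 2"
  shows "T_op n (concat (replicate n (diag_sw n x))) = (if (\<forall>j\<in>{1..n}. x j (n+1-j) = j) then 1 else 0)"
proof -
  have A0: "\<not> (\<forall>i\<in>{1..n}. \<forall>j\<in>{1..n}. x j (n+1-j) = i)"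
  proof
    assume H: "\<forall>i\<in>{1..n}. \<forall>j\<in>{1..n}. x j (n+1-j) = i"
    have "x 1 n = 1" using H[rule_format, of 1 1] assms by simp
    moreover have "x 1 n = 2" using H[rule_format, of 2 1] assms by simp
    ultimately show False by simp
  qed
  then have A: "(\<forall>i\<in>{1..n}. \<forall>j\<in>{1..n}. x j (n+1-j) = i) = False" by blast
  moreover have B: "(\<forall>i\<in>{1..n}. \<forall>j\<in>{1..n}. x j (n+1-j) = j) = (\<forall>j\<in>{1..n}. x j (n+1-j) = j)"
    using assms by auto
  show ?thesis unfolding T_sw A B by simp
qed

lemma T_ne': assumes "n \<ge> 2"
  shows "T_op n (concat (replicate n (diag_ne n x))) = (if (\<forall>j\<in>{1..n}. x j (n+1-j) = n+1-j) then 1 else 0)"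
proof -
  have A0: "\<not> (\<forall>i\<in>{1..n}. \<forall>j\<in>{1..n}. x (n+1-j) j = i)"
  proof
    assume H: "\<forall>i\<in>{1..n}. \<forall>j\<in>{1..n}. x (n+1-j) j = i"
    have "x n 1 = 1" using H[rule_format, of 1 1] assms by simp
    moreover have "x n 1 = 2" using H[rule_format, of 2 1] assms by simp
    ultimately show False by simp
  qed
  then have A: "(\<forall>i\<in>{1..n}. \<forall>j\<in>{1..n}. x (n+1-j) j = i) = False" by blast
  have B: "(\<forall>i\<in>{1..n}. \<forall>j\<in>{1..n}. x (n+1-j) j = j) = (\<forall>j\<in>{1..n}. x (n+1-j) j = j)"
    using assms by auto
  have C: "(\<forall>j\<in>{1..n}. x (n+1-j) j = j) = (\<forall>j\<in>{1..n}. x j (n+1-j) = n+1-j)"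
  proof
    assume H: "\<forall>j\<in>{1..n}. x (n+1-j) j = j"
    show "\<forall>j\<in>{1..n}. x j (n+1-j) = n+1-j"
    proof
      fix j assume j: "j \<in> {1..n}"
      have "n+1-j \<in> {1..n}" "n+1-(n+1-j) = j" using j by auto
      then show "x j (n+1-j) = n+1-j" using H by metis
    qed
  next
    assume H: "\<forall>j\<in>{1..n}. x j (n+1-j) = n+1-j"
    show "\<forall>j\<in>{1..n}. x (n+1-j) j = j"
    proof
      fix j assume j: "j \<in> {1..n}"
      have "n+1-j \<in> {1..n}" "n+1-(n+1-j) = j" using j by auto
      then show "x (n+1-j) j = j" using H by metis
    qed
  qed
  show ?thesis unfolding T_ne A B C using assms by auto
qed

lemma T_rl': assumes "n \<ge> 2"
  shows "T_op n (row_r n x 1 @ concat (map (row_l n x) [2..<n+1])) =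
   (if (\<forall>i\<in>{1..n}. \<forall>j\<in>{1..n}. x i j = i)
     \<or> (\<forall>i\<in>{1..n}. \<forall>j\<in>{1..n}. (if i = 1 then x 1 j else x i (n+1-j)) = j) then 1 else 0)"
proof -
  have "(\<forall>i\<in>{1..n}. \<forall>j\<in>{1..n}. (if i = 1 then x 1 j else x i (n+1-j)) = i) = (\<forall>i\<in>{1..n}. \<forall>j\<in>{1..n}. x i j = i)"
  proof
    assume H: "\<forall>i\<in>{1..n}. \<forall>j\<in>{1..n}. (if i = 1 then x 1 j else x i (n+1-j)) = i"
    show "\<forall>i\<in>{1..n}. \<forall>j\<in>{1..n}. x i j = i"
    proof (intro ballI)
      fix i j assume ij: "i \<in> {1..n}" "j \<in> {1..n}"
      show "x i j = i"
      proof (cases "i = 1")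
        case True then show ?thesis using H ij by force
      next
        case False
        have "n+1-j \<in> {1..n}" "n+1-(n+1-j) = j" using ij by auto
        then show ?thesis using H ij False by metis
      qed
    qed
  next
    assume H: "\<forall>i\<in>{1..n}. \<forall>j\<in>{1..n}. x i j = i"
    show "\<forall>i\<in>{1..n}. \<forall>j\<in>{1..n}. (if i = 1 then x 1 j else x i (n+1-j)) = i"
    proof (intro ballI)
      fix i j assume ij: "i \<in> {1..n}" "j \<in> {1..n}"
      have "n+1-j \<in> {1..n}" using ij by auto
      then show "(if i = 1 then x 1 j else x i (n+1-j)) = i" using H ij by auto
    qed
  qed
  moreover have n1: "n \<ge> 1" using assms by simp
  ultimately show ?thesis unfolding T_rl[OF n1] by (simp only:)
qed

lemma T_du': assumes "n \<ge> 2"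
  shows "T_op n (col_d n x 1 @ concat (map (col_u n x) [2..<n+1])) =
   (if (\<forall>i\<in>{1..n}. \<forall>j\<in>{1..n}. x i j = j)
     \<or> (\<forall>i\<in>{1..n}. \<forall>j\<in>{1..n}. (if i = 1 then x j 1 else x (n+1-j) i) = j) then 1 else 0)"
proof -
  have "(\<forall>i\<in>{1..n}. \<forall>j\<in>{1..n}. (if i = 1 then x j 1 else x (n+1-j) i) = i) = (\<forall>i\<in>{1..n}. \<forall>j\<in>{1..n}. x i j = j)"
  proof
    assume H: "\<forall>i\<in>{1..n}. \<forall>j\<in>{1..n}. (if i = 1 then x j 1 else x (n+1-j) i) = i"
    show "\<forall>i\<in>{1..n}. \<forall>j\<in>{1..n}. x i j = j"
    proof (intro ballI)
      fix a b assume ab: "a \<in> {1..n}" "b \<in> {1..n}"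
      show "x a b = b"
      proof (cases "b = 1")
        case True then show ?thesis using H[rule_format, of 1 a] ab by simp
      next
        case False
        have "n+1-a \<in> {1..n}" "n+1-(n+1-a) = a" using ab by auto
        then show ?thesis using H ab False by metis
      qed
    qed
  next
    assume H: "\<forall>i\<in>{1..n}. \<forall>j\<in>{1..n}. x i j = j"
    show "\<forall>i\<in>{1..n}. \<forall>j\<in>{1..n}. (if i = 1 then x j 1 else x (n+1-j) i) = i"
    proof (intro ballI)
      fix i j assume ij: "i \<in> {1..n}" "j \<in> {1..n}"
      have "n+1-j \<in> {1..n}" using ij by auto
      then show "(if i = 1 then x j 1 else x (n+1-j) i) = i" using H ij by auto
    qed
  qed
  moreover have n1: "n \<ge> 1" using assms by simp
  ultimately show ?thesis unfolding T_du[OF n1] by (simp only:)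
qed

lemma boolfact:
  "(if D1 then 1 else 0::nat) = (if P1 \<or> Q2 then 1 else 0) \<Longrightarrow>
   (if D2 then 1 else 0::nat) = (if P2 \<or> R2 then 1 else 0) \<Longrightarrow>
   \<not> (D1 \<and> Q2) \<Longrightarrow> \<not> (D2 \<and> R2) \<Longrightarrow>
   (if P1 \<or> P2 then 1 else 0::nat) = (if D1 \<or> D2 then 1 else 0)"
  by (cases D1; cases D2; cases P1; cases P2; cases Q2; cases R2) simp_all

lemma key_a:
  assumes n2: "n \<ge> 2"
    and C2: "T_op n (concat (replicate n (diag_sw n x))) = T_op n (row_r n x 1 @ concat (map (row_l n x) [2..<n+1]))"
    and C3: "T_op n (concat (replicate n (diag_ne n x))) = T_op n (col_d n x 1 @ concat (map (col_u n x) [2..<n+1]))"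
  shows "T_op n (concat (map (row_r n x) [1..<n+1])) = f_op n (diag_sw n x)"
proof -
  note C2' = C2[unfolded T_sw'[OF n2] T_rl'[OF n2]]
  note C3' = C3[unfolded T_ne'[OF n2] T_du'[OF n2]]
  have N1: "\<not> ((\<forall>j\<in>{1..n}. x j (n+1-j) = j) \<and> (\<forall>i\<in>{1..n}. \<forall>j\<in>{1..n}. (if i = 1 then x 1 j else x i (n+1-j)) = j))"
  proof
    assume H: "(\<forall>j\<in>{1..n}. x j (n+1-j) = j) \<and> (\<forall>i\<in>{1..n}. \<forall>j\<in>{1..n}. (if i = 1 then x 1 j else x i (n+1-j)) = j)"
    have "x 1 n = 1" using conjunct1[OF H, rule_format, of 1] n2 by simp
    moreover have "x 1 n = n" using conjunct2[OF H, rule_format, of 1 n] n2 by simp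
    ultimately show False using n2 by simp
  qed
  have N2: "\<not> ((\<forall>j\<in>{1..n}. x j (n+1-j) = n+1-j) \<and> (\<forall>i\<in>{1..n}. \<forall>j\<in>{1..n}. (if i = 1 then x j 1 else x (n+1-j) i) = j))"
  proof
    assume H: "(\<forall>j\<in>{1..n}. x j (n+1-j) = n+1-j) \<and> (\<forall>i\<in>{1..n}. \<forall>j\<in>{1..n}. (if i = 1 then x j 1 else x (n+1-j) i) = j)"
    have "x n 1 = 1" using conjunct1[OF H, rule_format, of n] n2 by simp
    moreover have "x n 1 = n" using conjunct2[OF H, rule_format, of 1 n] n2 by simp
    ultimately show False using n2 by simp
  qed
  have R: "f_op n (diag_sw n x) = (if (\<forall>j\<in>{1..n}. x j (n+1-j) = j) \<or> (\<forall>j\<in>{1..n}. x j (n+1-j) = n+1-j) then 1 else 0)"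
    unfolding f_op_def sw_eq_upt[symmetric] sw_eq_rev[symmetric] ..
  show ?thesis unfolding T_rows R
    by (rule boolfact[OF C2' C3' N1 N2])
qed

lemma key_b:
  assumes n2: "n \<ge> 2" and len: "length d = n" and sd: "set d \<subseteq> {0..<n+1}"
  shows "\<exists>x. admissible (n+1) d x \<and>
    T_op n (concat (replicate n (diag_sw n x))) = T_op n (row_r n x 1 @ concat (map (row_l n x) [2..<n+1])) \<and>
    T_op n (concat (replicate n (diag_ne n x))) = T_op n (col_d n x 1 @ concat (map (col_u n x) [2..<n+1]))"
proof (cases "d = [1..<n+1]")
  case True
  define x :: "nat \<Rightarrow> nat \<Rightarrow> nat" where "x = (\<lambda>i j. i)"
  have dg: "diag_sw n x = d" unfolding True sw_eq_upt x_def by simp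
  have b1: "(\<forall>j\<in>{1..n}. x j (n+1-j) = j) = True" by (simp add: x_def)
  have b2: "(\<forall>i\<in>{1..n}. \<forall>j\<in>{1..n}. x i j = i) = True" by (simp add: x_def)
  have a1: "(\<forall>j\<in>{1..n}. x j (n+1-j) = n+1-j) = False"
  proof (rule iffI[THEN sym, OF _ FalseE], simp)
    assume H: "\<forall>j\<in>{1..n}. x j (n+1-j) = n+1-j"
    show False using H[rule_format, of 1] n2 by (simp add: x_def)
  qed
  have a2: "(\<forall>i\<in>{1..n}. \<forall>j\<in>{1..n}. x i j = j) = False"
  proof (rule iffI[THEN sym, OF _ FalseE], simp)
    assume H: "\<forall>i\<in>{1..n}. \<forall>j\<in>{1..n}. x i j = j"
    show False using H[rule_format, of 1 2] n2 by (simp add: x_def)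
  qed
  have a3: "(\<forall>i\<in>{1..n}. \<forall>j\<in>{1..n}. (if i = 1 then x j 1 else x (n+1-j) i) = j) = False"
  proof (rule iffI[THEN sym, OF _ FalseE], simp)
    assume H: "\<forall>i\<in>{1..n}. \<forall>j\<in>{1..n}. (if i = 1 then x j 1 else x (n+1-j) i) = j"
    show False using H[rule_format, of 2 1] n2 by (simp add: x_def)
  qed
  have adm: "admissible (n+1) d x" unfolding admissible_def dom_A_def using dg by (auto simp: x_def)
  show ?thesis
    by (intro exI[of _ x] conjI adm) (simp_all only: T_sw'[OF n2] T_rl'[OF n2] T_ne'[OF n2] T_du'[OF n2] a1 a2 a3 b1 b2 simp_thms if_True if_False)
next
  case False1: False
  show ?thesis
  proof (cases "d = rev [1..<n+1]")
    case True
    define x :: "nat \<Rightarrow> nat \<Rightarrow> nat" where "x = (\<lambda>i j. j)"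
    have dg: "diag_sw n x = d" unfolding True sw_eq_rev x_def by simp
    have b1: "(\<forall>j\<in>{1..n}. x j (n+1-j) = n+1-j) = True" by (simp add: x_def)
    have b2: "(\<forall>i\<in>{1..n}. \<forall>j\<in>{1..n}. x i j = j) = True" by (simp add: x_def)
    have a1: "(\<forall>j\<in>{1..n}. x j (n+1-j) = j) = False"
    proof (rule iffI[THEN sym, OF _ FalseE], simp)
      assume H: "\<forall>j\<in>{1..n}. x j (n+1-j) = j"
      show False using H[rule_format, of 1] n2 by (simp add: x_def)
    qed
    have a2: "(\<forall>i\<in>{1..n}. \<forall>j\<in>{1..n}. x i j = i) = False"
    proof (rule iffI[THEN sym, OF _ FalseE], simp)
      assume H: "\<forall>i\<in>{1..n}. \<forall>j\<in>{1..n}. x i j = i"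
      show False using H[rule_format, of 1 2] n2 by (simp add: x_def)
    qed
    have a3: "(\<forall>i\<in>{1..n}. \<forall>j\<in>{1..n}. (if i = 1 then x 1 j else x i (n+1-j)) = j) = False"
    proof (rule iffI[THEN sym, OF _ FalseE], simp)
      assume H: "\<forall>i\<in>{1..n}. \<forall>j\<in>{1..n}. (if i = 1 then x 1 j else x i (n+1-j)) = j"
      show False using H[rule_format, of 2 1] n2 by (simp add: x_def)
    qed
    have adm: "admissible (n+1) d x" unfolding admissible_def dom_A_def using dg by (auto simp: x_def)
    show ?thesis
      by (intro exI[of _ x] conjI adm) (simp_all only: T_sw'[OF n2] T_rl'[OF n2] T_ne'[OF n2] T_du'[OF n2] a1 a2 a3 b1 b2 simp_thms if_True if_False)
  next
    case False2: False
    define x :: "nat \<Rightarrow> nat \<Rightarrow> nat" where "x = (\<lambda>i j. if i + j = n+1 then d!(i-1) else 0)"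
    have dg: "diag_sw n x = d"
      by (simp add: list_eq_iff_nth_eq nth_sw' len x_def)
    have x11: "x 1 1 = 0" using n2 by (simp add: x_def)
    have a1: "(\<forall>j\<in>{1..n}. x j (n+1-j) = j) = False" using False1 dg sw_eq_upt[of n x] by simp
    have a1': "(\<forall>j\<in>{1..n}. x j (n+1-j) = n+1-j) = False" using False2 dg sw_eq_rev[of n x] by simp
    have a2: "(\<forall>i\<in>{1..n}. \<forall>j\<in>{1..n}. x i j = j) = False"
    proof (rule iffI[THEN sym, OF _ FalseE], simp)
      assume H: "\<forall>i\<in>{1..n}. \<forall>j\<in>{1..n}. x i j = j"
      show False using H[rule_format, of 1 1] n2 x11 by simp
    qed
    have a2': "(\<forall>i\<in>{1..n}. \<forall>j\<in>{1..n}. x i j = i) = False"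
    proof (rule iffI[THEN sym, OF _ FalseE], simp)
      assume H: "\<forall>i\<in>{1..n}. \<forall>j\<in>{1..n}. x i j = i"
      show False using H[rule_format, of 1 1] n2 x11 by simp
    qed
    have a3: "(\<forall>i\<in>{1..n}. \<forall>j\<in>{1..n}. (if i = 1 then x j 1 else x (n+1-j) i) = j) = False"
    proof (rule iffI[THEN sym, OF _ FalseE], simp)
      assume H: "\<forall>i\<in>{1..n}. \<forall>j\<in>{1..n}. (if i = 1 then x j 1 else x (n+1-j) i) = j"
      show False using H[rule_format, of 1 1] n2 x11 by simp
    qed
    have a3': "(\<forall>i\<in>{1..n}. \<forall>j\<in>{1..n}. (if i = 1 then x 1 j else x i (n+1-j)) = j) = False"
    proof (rule iffI[THEN sym, OF _ FalseE], simp)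
      assume H: "\<forall>i\<in>{1..n}. \<forall>j\<in>{1..n}. (if i = 1 then x 1 j else x i (n+1-j)) = j"
      show False using H[rule_format, of 1 1] n2 x11 by simp
    qed
    have adm: "admissible (n+1) d x" unfolding admissible_def dom_A_def
    proof (intro conjI ballI)
      fix i j assume ij: "i \<in> {1..n+1-1}" "j \<in> {1..n+1-1}"
      show "x i j \<in> {0..<n+1}"
      proof (cases "i + j = n+1")
        case True
        then have "d!(i-1) \<in> set d" using ij len by auto
        then show ?thesis using sd True by (auto simp: x_def)
      qed (simp add: x_def)
    qed (simp add: dg)
    show ?thesis
      by (intro exI[of _ x] conjI adm) (simp_all only: T_sw'[OF n2] T_rl'[OF n2] T_ne'[OF n2] T_du'[OF n2] a1 a2 a3 a1' a2' a3' simp_thms if_True if_False)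
  qed
qed

theorem theorem3p13:
  fixes k :: nat
  assumes "k \<ge> 3"
  defines "n \<equiv> k - 1"
  shows
    "{d @ [y] | d y. length d = n \<and> set d \<subseteq> dom_A k \<and> y \<in> dom_A k \<and> f_op n d = y}
     = {d @ [y] | d y. length d = n \<and> set d \<subseteq> dom_A k \<and> y \<in> dom_A k \<and>
          (\<exists>x. admissible k d x \<and>
               T_op n (concat (map (row_r n x) [1..<n+1])) = y \<and>
               T_op n (concat (replicate n (diag_sw n x)))
                 = T_op n (row_r n x 1 @ concat (map (row_l n x) [2..<n+1])) \<and>
               T_op n (concat (replicate n (diag_ne n x)))
                 = T_op n (col_d n x 1 @ concat (map (col_u n x) [2..<n+1])))}
   \<and> {d @ [y] | d y. length d = n \<and> set d \<subseteq> dom_A k \<and> y \<in> dom_A k \<and> f_op n d = y}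
     = {d @ [y] | d y. length d = n \<and> set d \<subseteq> dom_A k \<and> y \<in> dom_A k \<and>
          (\<exists>x. admissible k d x \<and> (\<exists>u\<in>dom_A k. \<exists>v\<in>dom_A k.
               T_op n (concat (map (row_r n x) [1..<n+1])) = y \<and>
               T_op n (concat (replicate n (diag_sw n x))) = u \<and>
               T_op n (row_r n x 1 @ concat (map (row_l n x) [2..<n+1])) = u \<and>
               T_op n (concat (replicate n (diag_ne n x))) = v \<and>
               T_op n (col_d n x 1 @ concat (map (col_u n x) [2..<n+1])) = v))}"
proof -
  have n2: "n \<ge> 2" and kn: "k = n + 1" using assms by auto
  have dom: "dom_A k = {0..<n+1}" by (simp add: dom_A_def kn)
  have Tb: "\<And>xs. T_op n xs \<in> dom_A k" using n2 by (simp add: T_op_def dom)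
  have eq1: "(length d = n \<and> set d \<subseteq> dom_A k \<and> y \<in> dom_A k \<and> f_op n d = y) =
     (length d = n \<and> set d \<subseteq> dom_A k \<and> y \<in> dom_A k \<and>
          (\<exists>x. admissible k d x \<and>
               T_op n (concat (map (row_r n x) [1..<n+1])) = y \<and>
               T_op n (concat (replicate n (diag_sw n x)))
                 = T_op n (row_r n x 1 @ concat (map (row_l n x) [2..<n+1])) \<and>
               T_op n (concat (replicate n (diag_ne n x)))
                 = T_op n (col_d n x 1 @ concat (map (col_u n x) [2..<n+1]))))" for d y
  proof (cases "length d = n \<and> set d \<subseteq> dom_A k")
    case True
    then have len: "length d = n" and sd: "set d \<subseteq> {0..<n+1}" using dom by auto
    have "(f_op n d = y) = (\<exists>x. admissible k d x \<and>
               T_op n (concat (map (row_r n x) [1..<n+1])) = y \<and>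
               T_op n (concat (replicate n (diag_sw n x)))
                 = T_op n (row_r n x 1 @ concat (map (row_l n x) [2..<n+1])) \<and>
               T_op n (concat (replicate n (diag_ne n x)))
                 = T_op n (col_d n x 1 @ concat (map (col_u n x) [2..<n+1])))"
    proof
      assume fy: "f_op n d = y"
      obtain x where x: "admissible (n+1) d x"
        "T_op n (concat (replicate n (diag_sw n x))) = T_op n (row_r n x 1 @ concat (map (row_l n x) [2..<n+1]))"
        "T_op n (concat (replicate n (diag_ne n x))) = T_op n (col_d n x 1 @ concat (map (col_u n x) [2..<n+1]))"
        using key_b[OF n2 len sd] by blast
      have "diag_sw n x = d" using x(1) by (simp add: admissible_def)
      then have "T_op n (concat (map (row_r n x) [1..<n+1])) = y"
        using key_a[OF n2 x(2) x(3)] fy by simp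
      then show "\<exists>x. admissible k d x \<and>
               T_op n (concat (map (row_r n x) [1..<n+1])) = y \<and>
               T_op n (concat (replicate n (diag_sw n x)))
                 = T_op n (row_r n x 1 @ concat (map (row_l n x) [2..<n+1])) \<and>
               T_op n (concat (replicate n (diag_ne n x)))
                 = T_op n (col_d n x 1 @ concat (map (col_u n x) [2..<n+1]))"
        using x kn by blast
    next
      assume "\<exists>x. admissible k d x \<and>
               T_op n (concat (map (row_r n x) [1..<n+1])) = y \<and>
               T_op n (concat (replicate n (diag_sw n x)))
                 = T_op n (row_r n x 1 @ concat (map (row_l n x) [2..<n+1])) \<and>
               T_op n (concat (replicate n (diag_ne n x)))
                 = T_op n (col_d n x 1 @ concat (map (col_u n x) [2..<n+1]))"
      then obtain x where x: "admissible k d x" "T_op n (concat (map (row_r n x) [1..<n+1])) = y"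
        "T_op n (concat (replicate n (diag_sw n x))) = T_op n (row_r n x 1 @ concat (map (row_l n x) [2..<n+1]))"
        "T_op n (concat (replicate n (diag_ne n x))) = T_op n (col_d n x 1 @ concat (map (col_u n x) [2..<n+1]))"
        by blast
      have "diag_sw n x = d" using x(1) by (simp add: admissible_def n_def)
      then show "f_op n d = y" using key_a[OF n2 x(3) x(4)] x(2) by simp
    qed
    then show ?thesis using True by blast
  qed blast
  have eq2: "(\<exists>x. admissible k d x \<and>
               T_op n (concat (map (row_r n x) [1..<n+1])) = y \<and>
               T_op n (concat (replicate n (diag_sw n x)))
                 = T_op n (row_r n x 1 @ concat (map (row_l n x) [2..<n+1])) \<and>
               T_op n (concat (replicate n (diag_ne n x)))
                 = T_op n (col_d n x 1 @ concat (map (col_u n x) [2..<n+1]))) =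
          (\<exists>x. admissible k d x \<and> (\<exists>u\<in>dom_A k. \<exists>v\<in>dom_A k.
               T_op n (concat (map (row_r n x) [1..<n+1])) = y \<and>
               T_op n (concat (replicate n (diag_sw n x))) = u \<and>
               T_op n (row_r n x 1 @ concat (map (row_l n x) [2..<n+1])) = u \<and>
               T_op n (concat (replicate n (diag_ne n x))) = v \<and>
               T_op n (col_d n x 1 @ concat (map (col_u n x) [2..<n+1])) = v))" for d y
    using Tb by metis
  show ?thesis by (simp only: eq1 eq2 simp_thms)
qed

end
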